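(* Let $\underline s\in\overline{\mathcal S}$. Let $\underline u$ be either an infinite sequence of integers or a finite sequence of integers followed by the symbol $*$, and suppose that $\sigma^k(\underline u)\notin\{\mathbb K^+(\underline s),\mathbb K^-(\underline s)\}$ for all $k\geq 1$. Then there exists an external address $\underline r\in\overline{\mathcal S}$ with $\operatorname{itin}_{\underline s}(\underline r)=\underline u$; if $\underline u$ is periodic, then every such $\underline r$ is periodic. Furthermore, if $\underline t\in\overline{\mathcal S}$ and $k\geq 0$, then no two distinct elements of $\sigma^{-k}(\underline t)$ have the same itinerary with respect to $\underline s$. In particular, no two distinct intermediate external addresses have the same itinerary with respect to $\underline s$.
   Context: External addresses. An infinite external address is a sequence $\underline s=s_1s_2s_3\dots$ of integers. For $n\ge 2$, an intermediate external address of length $n$ is a finite string $s_1s_2\dots s_{n-1}\infty$ with $s_1,\dots,s_{n-2}\in\mathbb Z$ and $s_{n-1}\in\mathbb Z+\tfrac12$; the single symbol $\infty$ is the intermediate external address of length $1$. Let $\overline{\mathcal S}$ be the set of all infinite and intermediate external addresses and $\dot{\mathcal S}=\overline{\mathcal S}\setminus\{\infty\}$. $\dot{\mathcal S}$ is totally ordered lexicographically (entries compared as real numbers). $\overline{\mathcal S}$ carries the circular order obtained by adding $\infty$ as a single point lying above and below all of $\dot{\mathcal S}$. The shift $\sigma:\dot{\mathcal S}\to\overline{\mathcal S}$ deletes the first entry (so $\sigma(s_1\infty)=\infty$). For a number $j$ and an address $\underline t$, $j\underline t$ denotes the address with first entry $j$ followed by the entries of $\underline t$. A sequence is periodic if it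 is fixed by some iterate $\sigma^n$, $n\ge1$. Itineraries. For $\underline s\in\dot{\mathcal S}$ and $\underline r\in\overline{\mathcal S}$, $\operatorname{itin}_{\underline s}(\underline r)=u_1u_2\dots$ is defined by: $u_k=j\in\mathbb Z$ if $j\underline s<\sigma^{k-1}(\underline r)<(j+1)\underline s$; $u_k$ is the boundary symbol $\binom{j}{j-1}$ if $\sigma^{k-1}(\underline r)=j\underline s$ ($j\in\mathbb Z$); $u_k=*$ if $\sigma^{k-1}(\underline r)=\infty$, in which case the itinerary terminates with this entry. For $\underline s=\infty$ the same definition is used with $j\underline s,(j+1)\underline s$ replaced by $(j-\frac12)\infty,(j+\frac12)\infty$. The sequences $\operatorname{itin}^+_{\underline s}(\underline r)$, $\operatorname{itin}^-_{\underline s}(\underline r)$ are obtained by replacing every boundary symbol $\binom{j}{j-1}$ by $j$, respectively by $j-1$. The kneading sequence of $\underline s$ is $\mathbb K(\underline s)=\operatorname{itin}_{\underline s}(\underline s)$, and $\mathbb K^{\pm}(\underline s)=\operatorname{itin}^{\pm}_{\underline s}(\underline s)$. On symbol sequences, $\sigma$ also denotes the shift deleting the first entry. *)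

theory Defs
  imports Complex_Main
begin

text \<open>Infinite f      : the infinite address f 0, f 1, f 2, ...  (integers)
  Infty           : the intermediate address of length 1 (the single symbol infinity)
  Interm xs m     : the intermediate address xs_1 ... xs_(n-2) (m + 1/2) infinity,
                    i.e. all entries integers except the last finite one, which is the
                    half-integer m + 1/2.
  This representation is canonical (bijective onto the set of addresses).\<close>

datatype addr = Infinite "nat \<Rightarrow> int" | Infty | Interm "int list" int

fun addr_entry :: "addr \<Rightarrow> nat \<Rightarrow> real option" where
  "addr_entry (Infinite f) i = Some (of_int (f i))"
| "addr_entry Infty i = None"
| "addr_entry (Interm xs m) i =
     (if i < length xs then Some (of_int (xs ! i))
      else if i = length xs then Some (of_int m + 1/2) else None)"

definition addr_less :: "addr \<Rightarrow> addr \<Rightarrow> bool" where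
  "addr_less x y \<longleftrightarrow> (\<exists>k a b. (\<forall>i<k. addr_entry x i = addr_entry y i)
       \<and> addr_entry x k = Some a \<and> addr_entry y k = Some b \<and> a < b)"

fun addr_cons :: "int \<Rightarrow> addr \<Rightarrow> addr" where
  "addr_cons j (Infinite f) = Infinite (\<lambda>i. if i = 0 then j else f (i - 1))"
| "addr_cons j Infty = Interm [] j"
| "addr_cons j (Interm xs m) = Interm (j # xs) m"

fun addr_shift :: "addr \<Rightarrow> addr option" where
  "addr_shift (Infinite f) = Some (Infinite (\<lambda>i. f (Suc i)))"
| "addr_shift Infty = None"
| "addr_shift (Interm [] m) = Some Infty"
| "addr_shift (Interm (x # xs) m) = Some (Interm xs m)"

primrec addr_shiftn :: "nat \<Rightarrow> addr \<Rightarrow> addr option" where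
  "addr_shiftn 0 r = Some r"
| "addr_shiftn (Suc k) r = Option.bind (addr_shiftn k r) addr_shift"

definition addr_periodic :: "addr \<Rightarrow> bool" where
  "addr_periodic r \<longleftrightarrow> (\<exists>n\<ge>1. addr_shiftn n r = Some r)"

definition addr_intermediate :: "addr \<Rightarrow> bool" where
  "addr_intermediate r \<longleftrightarrow> (\<forall>f. r \<noteq> Infinite f)"

text \<open>A symbol sequence: either infinite (SInf) or a finite list followed by the
  terminating symbol * (SFin xs stands for xs followed by * ).\<close>
datatype 'a sseq = SInf "nat \<Rightarrow> 'a" | SFin "'a list"

fun sseq_shiftn :: "nat \<Rightarrow> 'a sseq \<Rightarrow> 'a sseq option" where
  "sseq_shiftn k (SInf f) = Some (SInf (\<lambda>i. f (i + k)))"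
| "sseq_shiftn k (SFin xs) = (if k \<le> length xs then Some (SFin (drop k xs)) else None)"

definition sseq_periodic :: "'a sseq \<Rightarrow> bool" where
  "sseq_periodic u \<longleftrightarrow> (\<exists>n\<ge>1. sseq_shiftn n u = Some u)"

text \<open>Itinerary symbols other than *: integers and boundary symbols (j over j-1).\<close>
datatype isym = SInt int | SBnd int

text \<open>The boundary points: j s for s not Infty, and (j - 1/2) infinity for s = Infty.\<close>
definition bnd :: "addr \<Rightarrow> int \<Rightarrow> addr" where
  "bnd s j = (if s = Infty then Interm [] (j - 1) else addr_cons j s)"

definition itin_sym :: "addr \<Rightarrow> addr \<Rightarrow> isym" where
  "itin_sym s x = (if \<exists>j. x = bnd s j then SBnd (THE j. x = bnd s j)
     else SInt (THE j. addr_less (bnd s j) x \<and> addr_less x (bnd s (j + 1))))"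

definition itin :: "addr \<Rightarrow> addr \<Rightarrow> isym sseq" where
  "itin s r = (if \<exists>k. addr_shiftn k r = Some Infty
     then SFin (map (\<lambda>i. itin_sym s (the (addr_shiftn i r)))
                    [0..<(LEAST k. addr_shiftn k r = Some Infty)])
     else SInf (\<lambda>i. itin_sym s (the (addr_shiftn i r))))"

definition itin_plus :: "addr \<Rightarrow> addr \<Rightarrow> int sseq" where
  "itin_plus s r = map_sseq (\<lambda>a. case a of SInt j \<Rightarrow> j | SBnd j \<Rightarrow> j) (itin s r)"

definition itin_minus :: "addr \<Rightarrow> addr \<Rightarrow> int sseq" where
  "itin_minus s r = map_sseq (\<lambda>a. case a of SInt j \<Rightarrow> j | SBnd j \<Rightarrow> j - 1) (itin s r)"

definition kneading_plus :: "addr \<Rightarrow> int sseq" where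
  "kneading_plus s = itin_plus s s"

definition kneading_minus :: "addr \<Rightarrow> int sseq" where
  "kneading_minus s = itin_minus s s"

end

theory Submission
  imports Defs
begin


abbreviation E where "E \<equiv> addr_entry"
abbreviation lt where "lt \<equiv> addr_less"

fun sh1 :: "addr \<Rightarrow> addr" where
  "sh1 (Infinite f) = Infinite (\<lambda>i. f (Suc i))"
| "sh1 Infty = Infty"
| "sh1 (Interm [] m) = Infty"
| "sh1 (Interm (x # xs) m) = Interm xs m"

lemma addr_shift_sh1: "addr_shift x = (if x = Infty then None else Some (sh1 x))"
  by (cases x rule: sh1.cases) auto

lemma E_sh1: "x \<noteq> Infty \<Longrightarrow> E (sh1 x) i = E x (Suc i)"
  by (cases x rule: sh1.cases) auto

lemma half_nonint: "(of_int m + 1/2 :: real) \<notin> \<int>"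
proof
  assume "(of_int m + 1/2 :: real) \<in> \<int>"
  then obtain k where k: "(of_int m + 1/2 :: real) = of_int k" by (auto elim: Ints_cases)
  hence "(of_int (2*m+1) :: real) = of_int (2*k)" by (simp add: field_simps)
  hence "2*m+1 = 2*k" by linarith
  thus False by presburger
qed

lemma E_None_Suc: "E x i = None \<Longrightarrow> E x (Suc i) = None"
  by (cases x) (auto split: if_splits)

lemma E_None_mono: "E x i = None \<Longrightarrow> i \<le> j \<Longrightarrow> E x j = None"
  by (induction j) (auto simp: le_Suc_eq E_None_Suc)

lemma E_nonint_Suc: "E x i = Some v \<Longrightarrow> v \<notin> \<int> \<Longrightarrow> E x (Suc i) = None"
  by (cases x) (auto split: if_splits)

lemma E_None_has_nonint:
  assumes "x \<noteq> Infty" "E x i = None"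
  shows "\<exists>j<i. \<exists>v. E x j = Some v \<and> v \<notin> \<int>"
proof (cases x)
  case (Infinite f) with assms show ?thesis by simp
next
  case Infty with assms show ?thesis by simp
next
  case (Interm xs m)
  with assms have "i > length xs" by (auto split: if_splits)
  with Interm show ?thesis using half_nonint by (intro exI[of _ "length xs"]) auto
qed

lemma E_inj: assumes "E x = E y" shows "x = y"
proof (cases x)
  case (Infinite f)
  show ?thesis
  proof (cases y)
    case (Infinite g)
    with \<open>x = Infinite f\<close> assms have "\<And>i. f i = g i" by (metis addr_entry.simps(1) of_int_eq_iff option.inject)
    thus ?thesis using Infinite \<open>x = Infinite f\<close> by auto
  next
    case Infty with \<open>x = Infinite f\<close> assms show ?thesis by (metis addr_entry.simps(1,2) option.distinct(1))
  next
    case (Interm ys m)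
    have "E y (Suc (length ys)) = None" using Interm by simp
    with \<open>x = Infinite f\<close> fun_cong[OF assms, of "Suc (length ys)"] show ?thesis by simp
  qed
next
  case Infty
  then show ?thesis
    using assms by (cases y) (auto dest!: fun_cong[of _ _ 0] split: if_splits)
next
  case (Interm xs m)
  note xI = Interm
  show ?thesis
  proof (cases y)
    case (Infinite g)
    have "E x (Suc (length xs)) = None" using Interm by simp
    with Infinite assms show ?thesis by simp
  next
    case Infty with Interm assms show ?thesis by (auto dest!: fun_cong[of _ _ 0] split: if_splits)
  next
    case (Interm ys m')
    note Interm2 = Interm
    note Interm = xI
    have l: "length xs = length ys"
    proof (rule ccontr)
      assume "length xs \<noteq> length ys"
      hence "length xs < length ys \<or> length ys < length xs" by auto
      thus False
      proof
        assume a: "length xs < length ys"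
        have "E x (length xs) = E y (length xs)" using assms by simp
        with a Interm Interm2 have "(of_int m + 1/2::real) = of_int (ys ! length xs)" by simp
        thus False using half_nonint[of m] by simp
      next
        assume a: "length ys < length xs"
        have "E x (length ys) = E y (length ys)" using assms by simp
        with a Interm Interm2 have "(of_int m' + 1/2::real) = of_int (xs ! length ys)" by simp
        thus False using half_nonint[of m'] by simp
      qed
    qed
    have "xs = ys"
    proof (rule nth_equalityI)
      show "length xs = length ys" by fact
      fix i assume "i < length xs"
      have "E x i = E y i" using assms by simp
      with \<open>i < length xs\<close> l Interm Interm2 show "xs ! i = ys ! i" by simp
    qed
    moreover have "m = m'"
    proof -
      have "E x (length xs) = E y (length xs)" using assms by simp
      with l Interm Interm2 show ?thesis by simp
    qed
    ultimately show ?thesis using Interm Interm2 by simp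
  qed
qed

lemma diff_pos:
  assumes "x \<noteq> Infty" "y \<noteq> Infty" "x \<noteq> y"
  shows "\<exists>q a b. (\<forall>i<q. E x i = E y i) \<and> E x q = Some a \<and> E y q = Some b \<and> a \<noteq> b"
proof -
  have "\<exists>i. E x i \<noteq> E y i" using assms(3) E_inj by blast
  define q where "q = (LEAST i. E x i \<noteq> E y i)"
  have q1: "E x q \<noteq> E y q" unfolding q_def by (rule LeastI_ex) fact
  have q2: "\<forall>i<q. E x i = E y i" unfolding q_def using not_less_Least by blast
  have nN: False if h: "z \<noteq> Infty" "E z q = None" "\<forall>i<q. E x i = E y i" "z = x \<or> z = y" for z
  proof -
    obtain j v where j: "j < q" "E z j = Some v" "v \<notin> \<int>" using E_None_has_nonint[OF h(1,2)] by blast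
    have "E x j = E y j" using h(3) j(1) by auto
    hence "E x j = Some v" "E y j = Some v" using h(4) j(2) by auto
    hence "E x (Suc j) = None" "E y (Suc j) = None" using E_nonint_Suc j(3) by auto
    hence "E x q = None" "E y q = None" using E_None_mono j(1) by auto
    thus False using q1 by simp
  qed
  obtain a where "E x q = Some a" using nN[of x] assms q2 by fastforce
  moreover obtain b where "E y q = Some b" using nN[of y] assms q2 by fastforce
  ultimately show ?thesis using q1 q2 by (intro exI[of _ q]) auto
qed

lemma lt_at_diff:
  assumes "\<forall>i<q. E x i = E y i" "E x q = Some a" "E y q = Some b" "a \<noteq> b"
  shows "lt x y \<longleftrightarrow> a < b"
proof
  assume "lt x y"
  then obtain k a' b' where k: "\<forall>i<k. E x i = E y i" "E x k = Some a'" "E y k = Some b'" "a' < b'"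
    unfolding addr_less_def by blast
  consider "k < q" | "k = q" | "q < k" by linarith
  thus "a < b"
  proof cases
    case 1 thus ?thesis using k assms by auto
  next
    case 2 thus ?thesis using k assms by auto
  next
    case 3 thus ?thesis using k assms by auto
  qed
next
  assume "a < b" thus "lt x y" unfolding addr_less_def using assms by blast
qed

lemma lt_Infty1[simp]: "\<not> lt Infty y" and lt_Infty2[simp]: "\<not> lt x Infty"
  unfolding addr_less_def by auto

lemma lt_irrefl[simp]: "\<not> lt x x"
  unfolding addr_less_def by auto

lemma lt_trichotomy:
  assumes "x \<noteq> Infty" "y \<noteq> Infty"
  shows "lt x y \<or> lt y x \<or> x = y"
proof (cases "x = y")
  case False
  then obtain q a b where "\<forall>i<q. E x i = E y i" "E x q = Some a" "E y q = Some b" "a \<noteq> b"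
    using diff_pos assms by blast
  moreover hence "\<forall>i<q. E y i = E x i" by auto
  ultimately have "lt x y = (a < b)" "lt y x = (b < a)"
    using lt_at_diff[of q x y a b] lt_at_diff[of q y x b a] by auto
  thus ?thesis using \<open>a \<noteq> b\<close> by linarith
qed simp

lemma lt_rec:
  assumes "x \<noteq> Infty" "y \<noteq> Infty"
  shows "lt x y \<longleftrightarrow> (\<exists>a b. E x 0 = Some a \<and> E y 0 = Some b \<and> (a < b \<or> (a = b \<and> lt (sh1 x) (sh1 y))))"
proof
  assume "lt x y"
  then obtain k a' b' where k: "\<forall>i<k. E x i = E y i" "E x k = Some a'" "E y k = Some b'" "a' < b'"
    unfolding addr_less_def by blast
  show "\<exists>a b. E x 0 = Some a \<and> E y 0 = Some b \<and> (a < b \<or> (a = b \<and> lt (sh1 x) (sh1 y)))"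
  proof (cases k)
    case 0 thus ?thesis using k by auto
  next
    case (Suc k')
    have "E x 0 = E y 0" using k Suc by auto
    moreover obtain a where "E x 0 = Some a"
      using E_None_mono[of x 0 k] k(2) by (cases "E x 0") auto
    moreover have "lt (sh1 x) (sh1 y)" unfolding addr_less_def
      using k Suc assms by (intro exI[of _ k']) (auto simp: E_sh1)
    ultimately show ?thesis by (intro exI[of _ a] exI[of _ a]) auto
  qed
next
  assume "\<exists>a b. E x 0 = Some a \<and> E y 0 = Some b \<and> (a < b \<or> (a = b \<and> lt (sh1 x) (sh1 y)))"
  then obtain a b where ab: "E x 0 = Some a" "E y 0 = Some b" "a < b \<or> (a = b \<and> lt (sh1 x) (sh1 y))" by blast
  show "lt x y"
  proof (cases "a < b")
    case True thus ?thesis unfolding addr_less_def using ab by (intro exI[of _ 0] exI[of _ a] exI[of _ b]) auto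
  next
    case False
    hence "a = b" "lt (sh1 x) (sh1 y)" using ab by auto
    then obtain k a' b' where k: "\<forall>i<k. E (sh1 x) i = E (sh1 y) i" "E (sh1 x) k = Some a'" "E (sh1 y) k = Some b'" "a' < b'"
      unfolding addr_less_def by blast
    show ?thesis unfolding addr_less_def
    proof (intro exI[of _ "Suc k"] exI conjI)
      show "\<forall>i<Suc k. E x i = E y i"
        using k(1) ab \<open>a = b\<close> assms by (auto simp: less_Suc_eq_0_disj E_sh1)
      show "E x (Suc k) = Some a'" "E y (Suc k) = Some b'" "a' < b'" using k assms by (auto simp: E_sh1)
    qed
  qed
qed

lemma lt_trans: "lt x y \<Longrightarrow> lt y z \<Longrightarrow> lt x z"
proof -
  assume xy: "lt x y" and yz: "lt y z"
  obtain k1 a1 b1 where k1: "\<forall>i<k1. E x i = E y i" "E x k1 = Some a1" "E y k1 = Some b1" "a1 < b1"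
    using xy unfolding addr_less_def by blast
  obtain k2 a2 b2 where k2: "\<forall>i<k2. E y i = E z i" "E y k2 = Some a2" "E z k2 = Some b2" "a2 < b2"
    using yz unfolding addr_less_def by blast
  show ?thesis
  proof (cases k1 k2 rule: linorder_cases)
    case less
    show ?thesis unfolding addr_less_def
      using k1 k2 less by (intro exI[of _ k1] exI[of _ a1] exI[of _ b1]) auto
  next
    case equal
    show ?thesis unfolding addr_less_def
      using k1 k2 equal by (intro exI[of _ k1] exI[of _ a1] exI[of _ b2]) auto
  next
    case greater
    show ?thesis unfolding addr_less_def
      using k1 k2 greater by (intro exI[of _ k2] exI[of _ a2] exI[of _ b2]) auto
  qed
qed

lemma lt_asym: "lt x y \<Longrightarrow> \<not> lt y x"
  using lt_trans lt_irrefl by blast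



definition sht :: "nat \<Rightarrow> addr \<Rightarrow> addr" where "sht k = sh1 ^^ k"

lemma sht_0[simp]: "sht 0 r = r" and sht_Suc: "sht (Suc k) r = sh1 (sht k r)"
  by (auto simp: sht_def)

lemma sht_Suc': "sht (Suc k) r = sht k (sh1 r)"
  by (simp add: sht_def funpow_Suc_right del: funpow.simps)

lemma sht_Infty[simp]: "sht k Infty = Infty"
  by (induction k) (auto simp: sht_Suc)

lemma sht_Infinite[simp]: "sht k (Infinite g) = Infinite (\<lambda>i. g (i + k))"
  by (induction k) (auto simp: sht_Suc)

lemma shiftn_sht: "addr_shiftn k r = (if (\<forall>j<k. sht j r \<noteq> Infty) then Some (sht k r) else None)"
proof (induction k)
  case (Suc k)
  show ?case
  proof (cases "\<forall>j<k. sht j r \<noteq> Infty")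
    case True
    then show ?thesis using Suc by (auto simp: addr_shift_sh1 sht_Suc less_Suc_eq)
  next
    case False
    then show ?thesis using Suc by (auto simp: less_Suc_eq)
  qed
qed simp

lemma cons_ne[simp]: "x \<noteq> Infty \<Longrightarrow> addr_cons a x \<noteq> Infty"
  by (cases x) auto

lemma sh1_cons[simp]: "sh1 (addr_cons a x) = x"
  by (cases x) auto

lemma E_cons0[simp]: "x \<noteq> Infty \<Longrightarrow> E (addr_cons a x) 0 = Some (of_int a)"
  by (cases x) auto

lemma cons_ne_Interm0[simp]: "x \<noteq> Infty \<Longrightarrow> addr_cons a x \<noteq> Interm [] m"
  by (cases x) auto

lemma cons_inj: "x \<noteq> Infty \<Longrightarrow> y \<noteq> Infty \<Longrightarrow> addr_cons a x = addr_cons b y \<longleftrightarrow> a = b \<and> x = y"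
proof
  assume xy: "x \<noteq> Infty" "y \<noteq> Infty" and e: "addr_cons a x = addr_cons b y"
  have "x = y" using arg_cong[OF e, of sh1] by simp
  moreover have "E (addr_cons a x) 0 = E (addr_cons b y) 0" using e by simp
  ultimately show "a = b \<and> x = y" using xy by simp
qed auto

lemma decomp:
  assumes "x \<noteq> Infty"
  shows "(\<exists>m. x = Interm [] m) \<or> (\<exists>a. x = addr_cons a (sh1 x) \<and> sh1 x \<noteq> Infty)"
proof (cases x)
  case (Infinite f)
  then show ?thesis by (intro disjI2 exI[of _ "f 0"]) (auto simp: fun_eq_iff split: nat.splits)
next
  case (Interm xs m)
  then show ?thesis by (cases xs) auto
qed (use assms in auto)

lemma lt_cons_cons:
  "x \<noteq> Infty \<Longrightarrow> y \<noteq> Infty \<Longrightarrow> lt (addr_cons a x) (addr_cons b y) \<longleftrightarrow> a < b \<or> (a = b \<and> lt x y)"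
  by (subst lt_rec) auto

lemma lt_I0_cons:
  "y \<noteq> Infty \<Longrightarrow> lt (Interm [] m) (addr_cons b y) \<longleftrightarrow> m < b"
  by (subst lt_rec) auto

lemma lt_cons_I0:
  "x \<noteq> Infty \<Longrightarrow> lt (addr_cons a x) (Interm [] m) \<longleftrightarrow> a \<le> m"
  by (subst lt_rec) auto

lemma lt_I0_I0:
  "lt (Interm [] m) (Interm [] m') \<longleftrightarrow> m < m'"
  by (subst lt_rec) auto

definition sector :: "addr \<Rightarrow> int \<Rightarrow> addr \<Rightarrow> bool" where
  "sector s j z \<longleftrightarrow> lt (bnd s j) z \<and> lt z (bnd s (j + 1))"

lemma sector_ne: "sector s j z \<Longrightarrow> z \<noteq> Infty"
  unfolding sector_def by auto

lemma bnd_ne[simp]: "bnd s j \<noteq> Infty"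
  unfolding bnd_def by auto

lemma bnd_lt: "lt (bnd s a) (bnd s b) \<longleftrightarrow> a < b"
  unfolding bnd_def by (auto simp: lt_cons_cons lt_I0_I0)

lemma bnd_inj: "bnd s a = bnd s b \<longleftrightarrow> a = b"
  unfolding bnd_def using cons_inj[of s s a b] by auto

lemma sector_unique: "sector s j z \<Longrightarrow> sector s j' z \<Longrightarrow> j = j'"
proof (rule ccontr)
  assume a: "sector s j z" "sector s j' z" "j \<noteq> j'"
  { fix j j' assume a: "sector s j z" "sector s j' z" "j < j'"
    have "lt z (bnd s (j+1))" "lt (bnd s j') z" using a unfolding sector_def by auto
    moreover have "\<not> lt (bnd s j') (bnd s (j+1))" using a(3) by (simp add: bnd_lt)
    moreover have "j + 1 = j' \<or> lt (bnd s (j+1)) (bnd s j')" using a(3) by (auto simp: bnd_lt)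
    ultimately have False using lt_trans lt_irrefl by metis
  }
  thus False using a by (metis linorder_neqE)
qed

lemma sector_bnd: "\<not> sector s j (bnd s c)"
  unfolding sector_def bnd_lt by auto

lemma itin_sym_bnd[simp]: "itin_sym s (bnd s c) = SBnd c"
  unfolding itin_sym_def by (auto simp: bnd_inj)

lemma itin_sym_sector: "sector s j z \<Longrightarrow> itin_sym s z = SInt j"
proof -
  assume a: "sector s j z"
  hence "\<not> (\<exists>c. z = bnd s c)" using sector_bnd by blast
  moreover have "(THE j. lt (bnd s j) z \<and> lt z (bnd s (j + 1))) = j"
    using a sector_unique unfolding sector_def[symmetric] by blast
  ultimately show ?thesis unfolding itin_sym_def sector_def by simp
qed

lemma sector_cons:
  "s \<noteq> Infty \<Longrightarrow> x \<noteq> Infty \<Longrightarrow> sector s j (addr_cons a x) \<longleftrightarrow> (a = j \<and> lt s x) \<or> (a = j + 1 \<and> lt x s)"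
  unfolding sector_def bnd_def by (auto simp: lt_cons_cons)

lemma sector_I0:
  "s \<noteq> Infty \<Longrightarrow> sector s j (Interm [] m) \<longleftrightarrow> m = j"
  unfolding sector_def bnd_def by (auto simp: lt_I0_cons lt_cons_I0)

lemma sector_Infty_cons:
  "x \<noteq> Infty \<Longrightarrow> sector Infty j (addr_cons a x) \<longleftrightarrow> a = j"
  unfolding sector_def bnd_def by (auto simp: lt_I0_cons lt_cons_I0)

lemma sector_Infty_I0: "\<not> sector Infty j (Interm [] m)"
  unfolding sector_def bnd_def by (auto simp: lt_I0_I0)

lemma sym_cases:
  assumes "z \<noteq> Infty"
  shows "(\<exists>c. z = bnd s c) \<or> (\<exists>j. sector s j z)"
proof (cases "s = Infty")
  case True
  from decomp[OF assms] show ?thesis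
  proof
    assume "\<exists>m. z = Interm [] m"
    then obtain m where "z = Interm [] m" by blast
    hence "z = bnd s (m+1)" using True by (simp add: bnd_def)
    thus ?thesis by blast
  next
    assume "\<exists>a. z = addr_cons a (sh1 z) \<and> sh1 z \<noteq> Infty"
    then obtain a where "z = addr_cons a (sh1 z)" "sh1 z \<noteq> Infty" by blast
    thus ?thesis using True sector_Infty_cons by metis
  qed
next
  case False
  from decomp[OF assms] show ?thesis
  proof
    assume "\<exists>m. z = Interm [] m"
    then obtain m where "z = Interm [] m" by blast
    thus ?thesis using False sector_I0 by blast
  next
    assume "\<exists>a. z = addr_cons a (sh1 z) \<and> sh1 z \<noteq> Infty"
    then obtain a where a: "z = addr_cons a (sh1 z)" "sh1 z \<noteq> Infty" by blast
    consider "lt s (sh1 z)" | "lt (sh1 z) s" | "sh1 z = s" using lt_trichotomy[OF False a(2)] by blast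
    thus ?thesis
    proof cases
      case 1 thus ?thesis using a False sector_cons by metis
    next
      case 2
      hence "sector s (a - 1) z" using a False sector_cons by (metis diff_add_cancel)
      thus ?thesis by blast
    next
      case 3 thus ?thesis using a False by (metis bnd_def)
    qed
  qed
qed

lemma sym_SInt_iff: "z \<noteq> Infty \<Longrightarrow> itin_sym s z = SInt j \<longleftrightarrow> sector s j z"
  using sym_cases[of z s] itin_sym_sector itin_sym_bnd by fastforce



definition reach :: "addr \<Rightarrow> bool" where "reach r \<longleftrightarrow> (\<exists>k. sht k r = Infty)"

definition LL :: "addr \<Rightarrow> nat" where "LL r = (LEAST k. sht k r = Infty)"

lemma itin_alt: "itin s r = (if reach r then SFin (map (\<lambda>i. itin_sym s (sht i r)) [0..<LL r])
                               else SInf (\<lambda>i. itin_sym s (sht i r)))"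
proof (cases "reach r")
  case True
  then obtain k0 where k0: "sht k0 r = Infty" unfolding reach_def by blast
  have L1: "sht (LL r) r = Infty" unfolding LL_def by (rule LeastI[of _ k0]) fact
  have L2: "\<And>j. j < LL r \<Longrightarrow> sht j r \<noteq> Infty" unfolding LL_def using not_less_Least by blast
  have iff: "addr_shiftn k r = Some Infty \<longleftrightarrow> k = LL r" for k
  proof
    assume a: "addr_shiftn k r = Some Infty"
    show "k = LL r"
    proof (rule ccontr)
      assume "k \<noteq> LL r"
      hence "k < LL r \<or> LL r < k" by auto
      thus False
      proof
        assume "k < LL r" thus False using a L2 by (auto simp: shiftn_sht split: if_splits)
      next
        assume "LL r < k" thus False using a L1 by (auto simp: shiftn_sht split: if_splits)
      qed
    qed
  next
    assume "k = LL r" thus "addr_shiftn k r = Some Infty" using L1 L2 by (simp add: shiftn_sht)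
  qed
  have ex: "\<exists>k. addr_shiftn k r = Some Infty" using iff by blast
  have le: "(LEAST k. addr_shiftn k r = Some Infty) = LL r" by (simp only: iff) (rule Least_equality, auto)
  have "map (\<lambda>i. itin_sym s (the (addr_shiftn i r))) [0..<LL r] = map (\<lambda>i. itin_sym s (sht i r)) [0..<LL r]"
    using L2 by (auto simp: shiftn_sht)
  thus ?thesis using True ex le unfolding itin_def by simp
next
  case False
  hence "\<And>k. sht k r \<noteq> Infty" unfolding reach_def by blast
  hence "\<not> (\<exists>k. addr_shiftn k r = Some Infty)" "\<And>i. the (addr_shiftn i r) = sht i r"
    by (auto simp: shiftn_sht)
  thus ?thesis using False unfolding itin_def by simp
qed

fun scons :: "'a \<Rightarrow> 'a sseq \<Rightarrow> 'a sseq" where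
  "scons a (SFin l) = SFin (a # l)"
| "scons a (SInf f) = SInf (case_nat a f)"

lemma scons_inj: "scons a x = scons b y \<longleftrightarrow> a = b \<and> x = y"
proof
  assume h: "scons a x = scons b y"
  show "a = b \<and> x = y"
  proof (cases x; cases y)
    fix f g assume xy: "x = SInf f" "y = SInf g"
    hence e: "case_nat a f = case_nat b g" using h by simp
    have "a = b" using fun_cong[OF e, of 0] by simp
    moreover have "f = g" using fun_cong[OF e, of "Suc i" for i] by (simp add: fun_eq_iff)
    ultimately show ?thesis using xy by simp
  qed (use h in auto)
qed simp

lemma map_scons: "map_sseq f (scons a x) = scons (f a) (map_sseq f x)"
  by (cases x) (auto simp: fun_eq_iff split: nat.splits)

lemma shift1_scons: "sseq_shiftn (Suc 0) (scons a x) = Some x"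
  by (cases x) auto

lemma shiftn_Suc_scons: "sseq_shiftn (Suc k) (scons a x) = sseq_shiftn k x"
  by (cases x) auto

lemma itin_Infty[simp]: "itin s Infty = SFin []"
proof -
  have "reach Infty" unfolding reach_def by auto
  moreover have "LL Infty = 0" unfolding LL_def by simp
  ultimately show ?thesis by (simp add: itin_alt)
qed

lemma itin_rec:
  assumes "r \<noteq> Infty"
  shows "itin s r = scons (itin_sym s r) (itin s (sh1 r))"
proof -
  have reach: "reach r \<longleftrightarrow> reach (sh1 r)"
  proof
    assume "reach r"
    then obtain k where "sht k r = Infty" unfolding reach_def by blast
    with assms obtain k' where "k = Suc k'" by (cases k) auto
    thus "reach (sh1 r)" using \<open>sht k r = Infty\<close> unfolding reach_def by (auto simp: sht_Suc')
  next
    assume "reach (sh1 r)"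
    then obtain k where "sht k (sh1 r) = Infty" unfolding reach_def by blast
    thus "reach r" unfolding reach_def by (metis sht_Suc')
  qed
  show ?thesis
  proof (cases "reach r")
    case True
    then obtain k where k: "sht k r = Infty" unfolding reach_def by blast
    have "LL r = Suc (LL (sh1 r))"
      unfolding LL_def using k assms by (subst Least_Suc[of _ k]) (auto simp: sht_Suc')
    thus ?thesis using True reach by (simp add: itin_alt map_upt_Suc sht_Suc' del: upt_Suc)
  next
    case False
    thus ?thesis using reach by (auto simp: itin_alt fun_eq_iff sht_Suc' split: nat.splits)
  qed
qed

lemma itin_Infinite: "itin s (Infinite g) = SInf (\<lambda>i. itin_sym s (Infinite (\<lambda>k. g (k + i))))"
  by (simp add: itin_alt reach_def)

lemma local_inj:
  assumes "r1 \<noteq> Infty" "r2 \<noteq> Infty" "sh1 r1 = sh1 r2" "itin_sym s r1 = itin_sym s r2"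
  shows "r1 = r2"
proof (cases "sh1 r1 = Infty")
  case True
  from decomp[OF assms(1)] True obtain m1 where m1: "r1 = Interm [] m1" by auto
  from decomp[OF assms(2)] True assms(3) obtain m2 where m2: "r2 = Interm [] m2" by auto
  show ?thesis
  proof (cases "s = Infty")
    case True
    have "r1 = bnd s (m1+1)" "r2 = bnd s (m2 + 1)" using m1 m2 True by (auto simp: bnd_def)
    thus ?thesis using assms(4) by auto
  next
    case False
    have "itin_sym s r1 = SInt m1" "itin_sym s r2 = SInt m2"
      using m1 m2 False sector_I0 itin_sym_sector by auto
    thus ?thesis using assms(4) m1 m2 by simp
  qed
next
  case False
  let ?x = "sh1 r1"
  from decomp[OF assms(1)] False obtain a1 where a1: "r1 = addr_cons a1 ?x" by auto
  from decomp[OF assms(2)] False assms(3) obtain a2 where a2: "r2 = addr_cons a2 ?x" by auto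
  from sym_cases[OF assms(1), of s] show ?thesis
  proof
    assume "\<exists>c. r1 = bnd s c"
    then obtain c where c: "r1 = bnd s c" by blast
    from sym_cases[OF assms(2), of s] show ?thesis
    proof
      assume "\<exists>c. r2 = bnd s c"
      then obtain c' where "r2 = bnd s c'" by blast
      thus ?thesis using c assms(4) by auto
    next
      assume "\<exists>j. sector s j r2"
      then obtain j where "sector s j r2" by blast
      thus ?thesis using c assms(4) itin_sym_sector by auto
    qed
  next
    assume "\<exists>j. sector s j r1"
    then obtain j where j1: "sector s j r1" by blast
    hence "itin_sym s r2 = SInt j" using assms(4) itin_sym_sector by auto
    hence j2: "sector s j r2" using sym_SInt_iff assms(2) by auto
    show ?thesis
    proof (cases "s = Infty")
      case True
      thus ?thesis using j1 j2 a1 a2 False sector_Infty_cons by metis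
    next
      case sF: False
      have "(a1 = j \<and> lt s ?x) \<or> (a1 = j + 1 \<and> lt ?x s)" using j1 a1 sector_cons[OF sF False] by metis
      moreover have "(a2 = j \<and> lt s ?x) \<or> (a2 = j + 1 \<and> lt ?x s)" using j2 a2 sector_cons[OF sF False] by metis
      ultimately have "a1 = a2" using lt_asym by blast
      thus ?thesis using a1 a2 by simp
    qed
  qed
qed

lemma shiftn_Suc_ne: "r \<noteq> Infty \<Longrightarrow> addr_shiftn (Suc k) r = addr_shiftn k (sh1 r)"
  by (auto simp: shiftn_sht sht_Suc' less_Suc_eq_0_disj)

lemma shiftn_Suc_Infty: "addr_shiftn (Suc k) Infty = None"
  by (auto simp: shiftn_sht)

lemma part2: "addr_shiftn k r1 = Some t \<Longrightarrow> addr_shiftn k r2 = Some t \<Longrightarrow> itin s r1 = itin s r2 \<Longrightarrow> r1 = r2"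
proof (induction k arbitrary: r1 r2)
  case 0 thus ?case by simp
next
  case (Suc k)
  have ne: "r1 \<noteq> Infty" "r2 \<noteq> Infty" using Suc.prems shiftn_Suc_Infty by auto
  have "scons (itin_sym s r1) (itin s (sh1 r1)) = scons (itin_sym s r2) (itin s (sh1 r2))"
    using Suc.prems(3) itin_rec ne by metis
  hence "itin_sym s r1 = itin_sym s r2" "itin s (sh1 r1) = itin s (sh1 r2)" by (auto simp: scons_inj)
  moreover have "sh1 r1 = sh1 r2" using Suc.IH Suc.prems shiftn_Suc_ne ne calculation(2) by metis
  ultimately show ?case using local_inj ne by blast
qed

lemma sht_Interm: "sht (Suc (length xs)) (Interm xs m) = Infty"
  by (induction xs) (auto simp: sht_Suc')

lemma part3:
  assumes "addr_intermediate r1" "addr_intermediate r2" "itin s r1 = itin s r2"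
  shows "r1 = r2"
proof -
  have reach: "reach r" if "addr_intermediate r" for r
  proof (cases r)
    case (Infinite f) thus ?thesis using that unfolding addr_intermediate_def by auto
  next
    case Infty thus ?thesis unfolding reach_def by (auto intro: exI[of _ 0])
  next
    case (Interm xs m) thus ?thesis unfolding reach_def using sht_Interm by blast
  qed
  have sh: "addr_shiftn (LL r) r = Some Infty" if rr: "reach r" for r
  proof -
    obtain k0 where k0: "sht k0 r = Infty" using rr unfolding reach_def by blast
    have L1: "sht (LL r) r = Infty" unfolding LL_def by (rule LeastI[of _ k0]) fact
    have L2: "\<And>j. j < LL r \<Longrightarrow> sht j r \<noteq> Infty" unfolding LL_def using not_less_Least by blast
    show ?thesis using L1 L2 by (simp add: shiftn_sht)
  qed
  have "LL r1 = LL r2" using assms reach by (simp add: itin_alt) (metis length_map length_upt minus_nat.diff_0)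
  thus ?thesis using part2[OF sh[OF reach[OF assms(1)]] _ assms(3)] sh[OF reach[OF assms(2)]] by simp
qed



definition lift :: "addr \<Rightarrow> int \<Rightarrow> addr \<Rightarrow> addr" where
  "lift s a r = (if s = Infty then addr_cons a r else if r = Infty then Interm [] a
                 else if lt s r then addr_cons a r else addr_cons (a + 1) r)"

lemma lift_props:
  assumes "r \<noteq> s"
  shows "sector s a (lift s a r) \<and> sh1 (lift s a r) = r"
proof (cases "s = Infty")
  case True
  hence "r \<noteq> Infty" using assms by simp
  thus ?thesis using True by (simp add: lift_def sector_Infty_cons)
next
  case False
  show ?thesis
  proof (cases "r = Infty")
    case True thus ?thesis using False by (simp add: lift_def sector_I0)
  next
    case rF: False
    show ?thesis
    proof (cases "lt s r")
      case True thus ?thesis using False rF by (simp add: lift_def sector_cons)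
    next
      case nlt: False
      hence "lt r s" using lt_trichotomy[OF False rF] assms by auto
      thus ?thesis using False rF nlt by (simp add: lift_def sector_cons)
    qed
  qed
qed

lemma itin_lift:
  assumes "r \<noteq> s"
  shows "itin s (lift s a r) = scons (SInt a) (itin s r)"
proof -
  have "lift s a r \<noteq> Infty" using lift_props[OF assms] sector_ne by blast
  thus ?thesis using itin_rec lift_props[OF assms] itin_sym_sector by metis
qed

lemma map_plus_SInt: "map_sseq (\<lambda>a. case a of SInt j \<Rightarrow> j | SBnd j \<Rightarrow> j) (map_sseq SInt u) = u"
  by (cases u) (auto simp: fun_eq_iff comp_def)

lemma map_minus_SInt: "map_sseq (\<lambda>a. case a of SInt j \<Rightarrow> j | SBnd j \<Rightarrow> j - 1) (map_sseq SInt u) = u"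
  by (cases u) (auto simp: fun_eq_iff comp_def)

lemma fin_exist:
  "(\<forall>k. 1 \<le> k \<and> k \<le> length xs \<longrightarrow> SFin (drop k xs) \<noteq> kneading_plus s) \<Longrightarrow>
   \<exists>r. itin s r = SFin (map SInt xs)"
proof (induction xs)
  case Nil
  show ?case by (intro exI[of _ Infty]) simp
next
  case (Cons a ys)
  have "\<forall>k. 1 \<le> k \<and> k \<le> length ys \<longrightarrow> SFin (drop k ys) \<noteq> kneading_plus s"
  proof (intro allI impI)
    fix k assume "1 \<le> k \<and> k \<le> length ys"
    hence "1 \<le> Suc k \<and> Suc k \<le> length (a # ys)" by simp
    thus "SFin (drop k ys) \<noteq> kneading_plus s" using Cons.prems by (metis drop_Suc_Cons)
  qed
  then obtain r where r: "itin s r = SFin (map SInt ys)" using Cons.IH by blast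
  have "r \<noteq> s"
  proof
    assume "r = s"
    hence "kneading_plus s = SFin ys"
      unfolding kneading_plus_def itin_plus_def using r map_plus_SInt[of "SFin ys"] by simp
    thus False using Cons.prems[rule_format, of 1] by simp
  qed
  hence "itin s (lift s a r) = SFin (map SInt (a # ys))" using itin_lift r by simp
  thus ?case by blast
qed



declare addr_cons.simps(1)[simp del]

definition gcons :: "int \<Rightarrow> (nat \<Rightarrow> int) \<Rightarrow> nat \<Rightarrow> int" where
  "gcons a h = (\<lambda>i. if i = 0 then a else h (i - 1))"

lemma Infinite_gcons: "Infinite (gcons a h) = addr_cons a (Infinite h)"
  by (simp add: gcons_def addr_cons.simps)

lemma gcons_shift: "(\<lambda>i. gcons a h (i + Suc k)) = (\<lambda>i. h (i + k))"
  by (simp add: gcons_def)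

lemma Infinite_split: "Infinite (\<lambda>i. g (i + k)) = addr_cons (g k) (Infinite (\<lambda>i. g (i + Suc k)))"
  by (auto simp: fun_eq_iff addr_cons.simps)

definition J :: "addr \<Rightarrow> (nat \<Rightarrow> int) \<Rightarrow> nat \<Rightarrow> (nat \<Rightarrow> int) set" where
  "J s f n = {g. \<forall>i\<le>n. sector s (f i) (Infinite (\<lambda>k. g (k + i)))}"

lemma J_mono: "n \<le> N \<Longrightarrow> J s f N \<subseteq> J s f n"
  unfolding J_def by auto

lemma E_s0: "s \<noteq> Infty \<Longrightarrow> \<exists>e. E s 0 = Some e"
  using E_None_has_nonint[of s 0] by (cases "E s 0") auto

lemma J0_infinite: "infinite (J s f 0)"
proof -
  define e where "e = (if s = Infty then 0 else the (E s 0))"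
  define F where "F = (\<lambda>n::nat. gcons (f 0) (\<lambda>_. \<lceil>e\<rceil> + 1 + int n))"
  have inj: "inj F"
  proof
    fix a b assume "F a = F b"
    hence "F a 1 = F b 1" by simp
    thus "a = b" by (simp add: F_def gcons_def)
  qed
  have sub: "range F \<subseteq> J s f 0"
  proof
    fix x assume "x \<in> range F"
    then obtain n where x: "x = F n" by blast
    let ?c = "\<lceil>e\<rceil> + 1 + int n"
    have "sector s (f 0) (addr_cons (f 0) (Infinite (\<lambda>_. ?c)))"
    proof (cases "s = Infty")
      case True thus ?thesis by (simp add: sector_Infty_cons)
    next
      case False
      then obtain e' where e': "E s 0 = Some e'" using E_s0 by blast
      hence "e' = e" using False by (simp add: e_def)
      have "e < of_int ?c" by linarith
      hence "lt s (Infinite (\<lambda>_. ?c))" using e' \<open>e' = e\<close> False by (subst lt_rec) auto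
      thus ?thesis using False by (simp add: sector_cons)
    qed
    thus "x \<in> J s f 0" using x unfolding J_def F_def by (simp add: Infinite_gcons[symmetric])
  qed
  show ?thesis using infinite_super[OF sub] inj by (simp add: finite_image_iff)
qed

definition liftg :: "addr \<Rightarrow> int \<Rightarrow> (nat \<Rightarrow> int) \<Rightarrow> nat \<Rightarrow> int" where
  "liftg s a h = gcons (if s = Infty \<or> lt s (Infinite h) then a else a + 1) h"

lemma Infinite_liftg: "Infinite (liftg s a h) = lift s a (Infinite h)"
  unfolding liftg_def lift_def by (auto simp: Infinite_gcons)

lemma J_step:
  assumes "infinite (J s (\<lambda>i. f (Suc i)) n)"
  shows "infinite (J s f (Suc n))"
proof -
  let ?A = "J s (\<lambda>i. f (Suc i)) n - {h. Infinite h = s}"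
  have "finite {h. Infinite h = s}"
  proof (cases s)
    case (Infinite h0)
    hence "{h. Infinite h = s} = {h0}" by auto
    thus ?thesis by simp
  qed auto
  hence infA: "infinite ?A" using assms by simp
  have inj: "inj_on (liftg s (f 0)) ?A"
  proof
    fix a b assume "liftg s (f 0) a = liftg s (f 0) b"
    hence "\<And>i. liftg s (f 0) a (Suc i) = liftg s (f 0) b (Suc i)" by simp
    thus "a = b" by (simp add: liftg_def gcons_def fun_eq_iff)
  qed
  have sub: "liftg s (f 0) ` ?A \<subseteq> J s f (Suc n)"
  proof
    fix x assume "x \<in> liftg s (f 0) ` ?A"
    then obtain h where h: "h \<in> ?A" "x = liftg s (f 0) h" by blast
    have hs: "Infinite h \<noteq> s" using h by simp
    show "x \<in> J s f (Suc n)" unfolding J_def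
    proof (intro CollectI allI impI)
      fix i assume i: "i \<le> Suc n"
      show "sector s (f i) (Infinite (\<lambda>k. x (k + i)))"
      proof (cases i)
        case 0
        thus ?thesis using h(2) lift_props[OF hs] by (simp add: Infinite_liftg)
      next
        case (Suc i')
        have "(\<lambda>k. x (k + i)) = (\<lambda>k. h (k + i'))" using h(2) Suc by (simp add: liftg_def gcons_def)
        moreover have "sector s (f (Suc i')) (Infinite (\<lambda>k. h (k + i')))"
          using h(1) i Suc unfolding J_def by auto
        ultimately show ?thesis using Suc by simp
      qed
    qed
  qed
  have "infinite (liftg s (f 0) ` ?A)" using inj infA finite_imageD by blast
  thus ?thesis using infinite_super[OF sub] by blast
qed

lemma J_infinite: "infinite (J s f n)"
proof (induction n arbitrary: f)
  case 0 show ?case by (rule J0_infinite)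
next
  case (Suc n) thus ?case using J_step by blast
qed

lemma J_entries:
  assumes "h \<in> J s f N" "k \<le> N"
  shows "h k = f k \<or> h k = f k + 1"
proof -
  have "sector s (f k) (Infinite (\<lambda>i. h (i + k)))" using assms unfolding J_def by auto
  hence sec: "sector s (f k) (addr_cons (h k) (Infinite (\<lambda>i. h (i + Suc k))))"
    by (simp only: Infinite_split[symmetric])
  show ?thesis
  proof (cases "s = Infty")
    case True thus ?thesis using sec sector_Infty_cons by auto
  next
    case False thus ?thesis using sec sector_cons by auto
  qed
qed

definition good :: "addr \<Rightarrow> (nat \<Rightarrow> int) \<Rightarrow> int list \<Rightarrow> bool" where
  "good s f p \<longleftrightarrow> (\<forall>N. \<exists>h\<in>J s f N. \<forall>i<length p. h i = p ! i)"

lemma good_ext: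
  assumes "good s f p"
  shows "good s f (p @ [f (length p)]) \<or> good s f (p @ [f (length p) + 1])"
proof (rule ccontr)
  assume "\<not> ?thesis"
  then obtain N1 N2 where
    N1: "\<not> (\<exists>h\<in>J s f N1. \<forall>i<length (p @ [f (length p)]). h i = (p @ [f (length p)]) ! i)" and
    N2: "\<not> (\<exists>h\<in>J s f N2. \<forall>i<length (p @ [f (length p) + 1]). h i = (p @ [f (length p) + 1]) ! i)"
    unfolding good_def by blast
  define N where "N = max (max N1 N2) (length p)"
  obtain h where h: "h \<in> J s f N" "\<forall>i<length p. h i = p ! i" using assms unfolding good_def by blast
  have "N1 \<le> N" "N2 \<le> N" by (auto simp: N_def)
  hence "h \<in> J s f N1" "h \<in> J s f N2" using h(1) J_mono by blast+
  moreover have "h (length p) = f (length p) \<or> h (length p) = f (length p) + 1"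
    using J_entries[OF h(1)] N_def by auto
  ultimately show False using N1 N2 h(2)
    by (auto simp: nth_append less_Suc_eq)
qed

fun pre :: "addr \<Rightarrow> (nat \<Rightarrow> int) \<Rightarrow> nat \<Rightarrow> int list" where
  "pre s f 0 = []"
| "pre s f (Suc n) = (if good s f (pre s f n @ [f n]) then pre s f n @ [f n] else pre s f n @ [f n + 1])"

lemma pre_len: "length (pre s f n) = n"
  by (induction n) auto

lemma pre_good: "good s f (pre s f n)"
proof (induction n)
  case 0
  have "J s f N \<noteq> {}" for N using J_infinite[of s f N] by auto
  thus ?case unfolding good_def by auto
next
  case (Suc n)
  thus ?case using good_ext[OF Suc] pre_len[of s f n] by auto
qed

lemma pre_nth: "i < n \<Longrightarrow> pre s f n ! i = pre s f (Suc i) ! i"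
proof (induction n)
  case (Suc n)
  show ?case
  proof (cases "i < n")
    case True thus ?thesis using Suc pre_len[of s f n] by (auto simp: nth_append)
  next
    case False thus ?thesis using Suc by (auto simp: less_Suc_eq)
  qed
qed simp

definition limg :: "addr \<Rightarrow> (nat \<Rightarrow> int) \<Rightarrow> nat \<Rightarrow> int" where
  "limg s f i = pre s f (Suc i) ! i"

lemma approx: "\<exists>h\<in>J s f N. \<forall>i<M. h i = limg s f i"
proof -
  obtain h where h1: "h \<in> J s f N" and h2: "\<forall>i<length (pre s f M). h i = pre s f M ! i"
    using pre_good[of s f M] unfolding good_def by blast
  have "\<forall>i<M. h i = limg s f i"
  proof (intro allI impI)
    fix i assume i: "i < M"
    hence "h i = pre s f M ! i" using h2 pre_len by metis
    also have "\<dots> = limg s f i" unfolding limg_def by (rule pre_nth) fact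
    finally show "h i = limg s f i" .
  qed
  thus ?thesis using h1 by blast
qed

lemma lt_local:
  assumes "x \<noteq> Infty" "y \<noteq> Infty" "x \<noteq> y"
  shows "\<exists>q. \<forall>x'. (\<forall>i\<le>q. E x' i = E x i) \<longrightarrow> (lt x' y \<longleftrightarrow> lt x y) \<and> (lt y x' \<longleftrightarrow> lt y x)"
proof -
  obtain q a b where q: "\<forall>i<q. E x i = E y i" "E x q = Some a" "E y q = Some b" "a \<noteq> b"
    using diff_pos[OF assms] by blast
  show ?thesis
  proof (intro exI[of _ q] allI impI)
    fix x' assume x': "\<forall>i\<le>q. E x' i = E x i"
    have q': "\<forall>i<q. E x' i = E y i" "E x' q = Some a" using q x' by auto
    have "lt x' y \<longleftrightarrow> a < b" using lt_at_diff[OF q'(1) q'(2) q(3) q(4)] .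
    moreover have "lt x y \<longleftrightarrow> a < b" using lt_at_diff[OF q] .
    moreover have "lt y x' \<longleftrightarrow> b < a" using lt_at_diff[of q y x' b a] q' q by auto
    moreover have "lt y x \<longleftrightarrow> b < a" using lt_at_diff[of q y x b a] q by auto
    ultimately show "(lt x' y \<longleftrightarrow> lt x y) \<and> (lt y x' \<longleftrightarrow> lt y x)" by simp
  qed
qed

lemma closure_lemma:
  assumes apx: "\<And>N M. \<exists>h\<in>J s f N. \<forall>i<M. h i = g i"
  shows "sector s (f m) (Infinite (\<lambda>i. g (i + m))) \<or> Infinite (\<lambda>i. g (i + m)) = bnd s (f m)
         \<or> Infinite (\<lambda>i. g (i + m)) = bnd s (f m + 1)"
proof (rule ccontr)
  let ?G = "Infinite (\<lambda>i. g (i + m))"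
  assume "\<not> ?thesis"
  hence n: "\<not> sector s (f m) ?G" "?G \<noteq> bnd s (f m)" "?G \<noteq> bnd s (f m + 1)" by auto
  obtain q1 where q1: "\<forall>x'. (\<forall>i\<le>q1. E x' i = E ?G i) \<longrightarrow> (lt x' (bnd s (f m)) \<longleftrightarrow> lt ?G (bnd s (f m))) \<and> (lt (bnd s (f m)) x' \<longleftrightarrow> lt (bnd s (f m)) ?G)"
    using lt_local[of ?G "bnd s (f m)"] n by auto
  obtain q2 where q2: "\<forall>x'. (\<forall>i\<le>q2. E x' i = E ?G i) \<longrightarrow> (lt x' (bnd s (f m + 1)) \<longleftrightarrow> lt ?G (bnd s (f m + 1))) \<and> (lt (bnd s (f m + 1)) x' \<longleftrightarrow> lt (bnd s (f m + 1)) ?G)"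
    using lt_local[of ?G "bnd s (f m + 1)"] n by auto
  obtain h where h: "h \<in> J s f m" "\<forall>i<m + q1 + q2 + 1. h i = g i" using apx by blast
  let ?H = "Infinite (\<lambda>i. h (i + m))"
  have "sector s (f m) ?H" using h(1) unfolding J_def by auto
  moreover have "\<forall>i\<le>q1. E ?H i = E ?G i" "\<forall>i\<le>q2. E ?H i = E ?G i" using h(2) by auto
  ultimately have "sector s (f m) ?G" using q1 q2 unfolding sector_def by blast
  thus False using n by simp
qed

lemma shift_order:
  "(\<forall>i<d. g (k + i) = h (k + i)) \<Longrightarrow>
   lt (Infinite (\<lambda>i. g (i + k))) (Infinite (\<lambda>i. h (i + k))) \<longleftrightarrow>
   lt (Infinite (\<lambda>i. g (i + (k + d)))) (Infinite (\<lambda>i. h (i + (k + d))))"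
proof (induction d arbitrary: k)
  case 0 thus ?case by simp
next
  case (Suc d)
  have "g k = h k" using Suc.prems by (metis add_0_right zero_less_Suc)
  hence st1: "lt (Infinite (\<lambda>i. g (i + k))) (Infinite (\<lambda>i. h (i + k))) \<longleftrightarrow>
         lt (Infinite (\<lambda>i. g (i + Suc k))) (Infinite (\<lambda>i. h (i + Suc k)))"
    by (subst (1 2) Infinite_split) (simp add: lt_cons_cons)
  have pr: "\<forall>i<d. g (Suc k + i) = h (Suc k + i)"
  proof (intro allI impI)
    fix i assume "i < d" hence "Suc i < Suc d" by simp
    hence "g (k + Suc i) = h (k + Suc i)" using Suc.prems by blast
    thus "g (Suc k + i) = h (Suc k + i)" by simp
  qed
  have st2: "lt (Infinite (\<lambda>i. g (i + Suc k))) (Infinite (\<lambda>i. h (i + Suc k))) \<longleftrightarrow> lt (Infinite (\<lambda>i. g (i + (Suc k + d)))) (Infinite (\<lambda>i. h (i + (Suc k + d))))"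
    by (rule Suc.IH[OF pr])
  have e: "Suc k + d = k + Suc d" by simp
  show ?case using st1 st2 by (simp only: e)
qed



declare addr_cons.simps(1)[simp del]

lemma itin_Infinite': "itin s (Infinite g) = SInf (\<lambda>i. itin_sym s (Infinite (\<lambda>k. g (k + i))))"
  by (rule itin_Infinite)

lemma inf_exist:
  assumes hyp: "\<forall>k\<ge>1. sseq_shiftn k (SInf f) \<noteq> Some (kneading_plus s) \<and> sseq_shiftn k (SInf f) \<noteq> Some (kneading_minus s)"
  shows "\<exists>r. itin s r = SInf (\<lambda>i. SInt (f i))"
proof -
  define g where "g = limg s f"
  have apx: "\<And>N M. \<exists>h\<in>J s f N. \<forall>i<M. h i = g i" unfolding g_def by (rule approx)
  define G where "G m = Infinite (\<lambda>i. g (i + m))" for m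
  have cl: "sector s (f m) (G m) \<or> G m = bnd s (f m) \<or> G m = bnd s (f m + 1)" for m
    unfolding G_def by (rule closure_lemma[OF apx])
  have Gsplit: "G t = addr_cons (g t) (G (Suc t))" for t unfolding G_def by (rule Infinite_split)
  have Gne: "G t \<noteq> Infty" for t unfolding G_def by simp
  show ?thesis
  proof (cases "\<forall>m. sector s (f m) (G m)")
    case True
    hence "itin s (Infinite g) = SInf (\<lambda>i. SInt (f i))"
      unfolding itin_Infinite by (auto simp: fun_eq_iff G_def itin_sym_sector)
    thus ?thesis by blast
  next
    case False
    then obtain m0 where m0: "\<not> sector s (f m0) (G m0)" by blast
    then obtain c where c: "G m0 = bnd s c" using cl by blast
    have sF: "s \<noteq> Infty"
    proof
      assume "s = Infty"
      hence "G m0 = Interm [] (c - 1)" using c by (simp add: bnd_def)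
      thus False unfolding G_def by simp
    qed
    have hit_bnd: "G t = bnd s c' \<Longrightarrow> G (Suc t) = s \<and> c' = g t" for t c'
      using Gsplit[of t] cons_inj[OF Gne sF] sF unfolding bnd_def by auto
    have hit_val: "g t = f t \<or> g t = f t + 1" if "G (Suc t) = s" for t
    proof -
      have "G t = bnd s (g t)" using Gsplit[of t] that sF by (simp add: bnd_def)
      hence "G t = bnd s (f t) \<or> G t = bnd s (f t + 1)" using cl[of t] sector_bnd by metis
      thus ?thesis using \<open>G t = bnd s (g t)\<close> bnd_inj by metis
    qed
    have consist: "(g t = f t \<longleftrightarrow> g t' = f t')" if ht: "G (Suc t) = s" and ht': "G (Suc t') = s" and tt: "t < t'" for t t'
    proof -
      obtain h where h: "h \<in> J s f t'" "\<forall>i<t' + 2. h i = g i" using apx by blast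
      define H where "H k = Infinite (\<lambda>i. h (i + k))" for k
      have Hsplit: "H t = addr_cons (h t) (H (Suc t))" for t unfolding H_def by (rule Infinite_split)
      have Hne: "H t \<noteq> Infty" for t unfolding H_def by simp
      have key: "g k = f k \<longleftrightarrow> lt s (H (Suc k))" if "k \<le> t'" for k
      proof -
        have "sector s (f k) (H k)" using h(1) that unfolding J_def H_def by auto
        hence "sector s (f k) (addr_cons (g k) (H (Suc k)))" using Hsplit[of k] h(2) that by simp
        hence "(g k = f k \<and> lt s (H (Suc k))) \<or> (g k = f k + 1 \<and> lt (H (Suc k)) s)"
          using sector_cons[OF sF Hne] by blast
        thus ?thesis using lt_asym by auto
      qed
      have "lt (G (Suc t)) (H (Suc t)) \<longleftrightarrow> lt (G (Suc t + (t' - t))) (H (Suc t + (t' - t)))"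
        unfolding G_def H_def
      proof (rule shift_order)
        show "\<forall>i<t' - t. g (Suc t + i) = h (Suc t + i)" using h(2) tt by auto
      qed
      moreover have "Suc t + (t' - t) = Suc t'" using tt by simp
      ultimately have "lt s (H (Suc t)) \<longleftrightarrow> lt s (H (Suc t'))" using ht ht' by simp
      thus ?thesis using key[of t] key[of t'] tt by simp
    qed
    define n where "n = Suc m0"
    have hit0: "G n = s" using hit_bnd[OF c] n_def by simp
    have syms: "itin_sym s (G (i + n)) = (if G (Suc (i + n)) = s then SBnd (g (i + n)) else SInt (f (i + n)))" for i
    proof (cases "sector s (f (i + n)) (G (i + n))")
      case True
      moreover have "G (Suc (i + n)) \<noteq> s"
      proof
        assume "G (Suc (i + n)) = s"
        hence "G (i + n) = bnd s (g (i + n))" using Gsplit[of "i + n"] sF by (simp add: bnd_def)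
        thus False using True sector_bnd by metis
      qed
      ultimately show ?thesis using itin_sym_sector by simp
    next
      case False
      then obtain c' where "G (i + n) = bnd s c'" using cl by blast
      thus ?thesis using hit_bnd by fastforce
    qed
    have itss: "itin s s = SInf (\<lambda>i. itin_sym s (G (i + n)))"
    proof -
      have "s = Infinite (\<lambda>i. g (i + n))" using hit0 unfolding G_def by simp
      hence "itin s s = SInf (\<lambda>i. itin_sym s (Infinite (\<lambda>k. g (k + i + n))))"
        using itin_Infinite[of s "\<lambda>i. g (i + n)"] by (simp add: add.assoc)
      thus ?thesis unfolding G_def by (simp add: add.assoc)
    qed
    have sh: "sseq_shiftn n (SInf f) = Some (SInf (\<lambda>i. f (i + n)))" by simp
    have n1: "n \<ge> 1" unfolding n_def by simp
    have hitm0: "G (Suc m0) = s" using hit0 n_def by simp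
    show ?thesis
    proof (cases "g m0 = f m0")
      case True
      have "\<forall>i. G (Suc (i + n)) = s \<longrightarrow> g (i + n) = f (i + n)"
        using consist[OF hitm0] True n_def by (metis add_Suc_right less_add_Suc2)
      hence "kneading_plus s = SInf (\<lambda>i. f (i + n))"
        unfolding kneading_plus_def itin_plus_def itss by (auto simp: fun_eq_iff syms)
      thus ?thesis using hyp sh n1 by auto
    next
      case False
      hence gm0: "g m0 = f m0 + 1" using hit_val[OF hitm0] by auto
      have "\<forall>i. G (Suc (i + n)) = s \<longrightarrow> g (i + n) = f (i + n) + 1"
      proof (intro allI impI)
        fix i assume a: "G (Suc (i + n)) = s"
        have "m0 < i + n" unfolding n_def by simp
        hence "g (i + n) \<noteq> f (i + n)" using consist[OF hitm0 a] False by simp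
        thus "g (i + n) = f (i + n) + 1" using hit_val[OF a] by simp
      qed
      hence "kneading_minus s = SInf (\<lambda>i. f (i + n))"
        unfolding kneading_minus_def itin_minus_def itss by (auto simp: fun_eq_iff syms)
      thus ?thesis using hyp sh n1 by auto
    qed
  qed
qed



declare addr_cons.simps(1)[simp del]

definition RR :: "addr \<Rightarrow> (nat \<Rightarrow> int) \<Rightarrow> (nat \<Rightarrow> int) set" where
  "RR s f = {g. \<forall>m. sector s (f m) (Infinite (\<lambda>i. g (i + m)))}"

lemma RR_J: "g \<in> RR s f \<Longrightarrow> g \<in> J s f N"
  unfolding RR_def J_def by auto

lemma itin_RR:
  assumes "itin s r = SInf (\<lambda>i. SInt (f i))"
  shows "\<exists>g. r = Infinite g \<and> g \<in> RR s f"
proof -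
  have nr: "\<not> reach r" using assms by (auto simp: itin_alt split: if_splits)
  obtain g where r: "r = Infinite g"
  proof (cases r)
    case Infty thus ?thesis using nr unfolding reach_def by (metis sht_0)
  next
    case (Interm xs m) thus ?thesis using nr sht_Interm unfolding reach_def by blast
  qed
  have "\<And>i. itin_sym s (Infinite (\<lambda>k. g (k + i))) = SInt (f i)"
    using assms unfolding r itin_Infinite by (simp add: fun_eq_iff)
  hence "g \<in> RR s f" unfolding RR_def using sym_SInt_iff by auto
  thus ?thesis using r by blast
qed

lemma RR_tail: "g \<in> RR s w \<Longrightarrow> (\<lambda>i. g (Suc i)) \<in> RR s (\<lambda>i. w (Suc i))"
  unfolding RR_def by (auto simp: add_Suc_right[symmetric] simp del: add_Suc_right)

lemma RR_tail_inj: "inj_on (\<lambda>g i. g (Suc i)) (RR s w)"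
proof
  fix g1 g2 assume g: "g1 \<in> RR s w" "g2 \<in> RR s w" and e: "(\<lambda>i. g1 (Suc i)) = (\<lambda>i. g2 (Suc i))"
  have "sector s (w 0) (Infinite (\<lambda>i. g1 (i + 0)))" "sector s (w 0) (Infinite (\<lambda>i. g2 (i + 0)))"
    using g unfolding RR_def by blast+
  hence "sector s (w 0) (Infinite g1)" "sector s (w 0) (Infinite g2)" by simp_all
  hence "itin_sym s (Infinite g1) = itin_sym s (Infinite g2)" using itin_sym_sector by simp
  moreover have "sh1 (Infinite g1) = sh1 (Infinite g2)" using e by simp
  ultimately have "Infinite g1 = Infinite g2" using local_inj by blast
  thus "g1 = g2" by simp
qed

definition pfx :: "nat \<Rightarrow> (nat \<Rightarrow> int) \<Rightarrow> int list" where "pfx n g = map g [0..<n]"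

lemma pfx_eq: "pfx n a = pfx n b \<longleftrightarrow> (\<forall>i<n. a i = b i)"
  unfolding pfx_def by (auto simp: list_eq_iff_nth_eq)

lemma pfx_Suc: "pfx (Suc n) a = pfx (Suc n) b \<longleftrightarrow> a 0 = b 0 \<and> pfx n (\<lambda>i. a (Suc i)) = pfx n (\<lambda>i. b (Suc i))"
  unfolding pfx_eq by (auto simp: less_Suc_eq_0_disj)

lemma betw:
  assumes "lt a s" "lt s b" "\<forall>i<n. E a i = E b i"
  shows "(\<forall>i<n. E s i = E a i) \<and> (\<forall>i\<le>n. lt (sht i a) (sht i s) \<and> lt (sht i s) (sht i b))"
  using assms
proof (induction n arbitrary: a s b)
  case 0 thus ?case by simp
next
  case (Suc n)
  have ne: "a \<noteq> Infty" "s \<noteq> Infty" "b \<noteq> Infty" using Suc.prems by auto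
  obtain ea es where e1: "E a 0 = Some ea" "E s 0 = Some es" "ea < es \<or> (ea = es \<and> lt (sh1 a) (sh1 s))"
    using Suc.prems(1) lt_rec[OF ne(1,2)] by blast
  obtain es' eb where e2: "E s 0 = Some es'" "E b 0 = Some eb" "es' < eb \<or> (es' = eb \<and> lt (sh1 s) (sh1 b))"
    using Suc.prems(2) lt_rec[OF ne(2,3)] by blast
  have "E a 0 = E b 0" using Suc.prems(3) by auto
  hence eq: "ea = es" "es = eb" "lt (sh1 a) (sh1 s)" "lt (sh1 s) (sh1 b)" using e1 e2 by auto
  have "\<forall>i<n. E (sh1 a) i = E (sh1 b) i" using Suc.prems(3) ne by (auto simp: E_sh1)
  from Suc.IH[OF eq(3,4) this] have IH:
    "\<forall>i<n. E (sh1 s) i = E (sh1 a) i"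
    "\<forall>i\<le>n. lt (sht i (sh1 a)) (sht i (sh1 s)) \<and> lt (sht i (sh1 s)) (sht i (sh1 b))" by auto
  have A: "E s i = E a i" if "i < Suc n" for i
    using that IH(1) e1 e2 eq ne by (cases i) (auto simp: E_sh1)
  have B: "lt (sht i a) (sht i s) \<and> lt (sht i s) (sht i b)" if "i \<le> Suc n" for i
    using that IH(2) Suc.prems by (cases i) (auto simp: sht_Suc')
  show ?case using A B by blast
qed

lemma sector_convex: "sector s j x \<Longrightarrow> sector s j y \<Longrightarrow> lt x z \<Longrightarrow> lt z y \<Longrightarrow> sector s j z"
  unfolding sector_def using lt_trans by blast

definition HD :: "addr \<Rightarrow> nat \<Rightarrow> (nat \<Rightarrow> int) \<Rightarrow> bool" where
  "HD s D w \<longleftrightarrow> (\<forall>m. \<exists>i<D. \<not> sector s (w (m + i)) (sht i s))"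

lemma HD_tail: "HD s D w \<Longrightarrow> HD s D (\<lambda>i. w (Suc i))"
  unfolding HD_def by (metis add_Suc)

lemma RR_first: "g \<in> RR s w \<Longrightarrow> g 0 = w 0 \<or> g 0 = w 0 + 1"
  using J_entries[OF RR_J[of g s w 0]] by auto

lemma collision:
  assumes HD: "HD s D w" and g: "g1 \<in> RR s w" "g2 \<in> RR s w"
    and ne: "(\<lambda>i. g1 (Suc i)) \<noteq> (\<lambda>i. g2 (Suc i))"
    and pf: "pfx n (\<lambda>i. g1 (Suc i)) = pfx n (\<lambda>i. g2 (Suc i))"
    and pS: "pfx (Suc n) g1 \<noteq> pfx (Suc n) g2"
  shows "Suc n < D \<and> (\<forall>i<n. g1 (Suc i) = g2 (Suc i)) \<and> g1 0 \<noteq> g2 0 \<and>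
         (\<forall>i<n. E s i = Some (of_int (g1 (Suc i))))"
proof -
  let ?X1 = "Infinite (\<lambda>i. g1 (Suc i))" and ?X2 = "Infinite (\<lambda>i. g2 (Suc i))"
  have agree: "\<forall>i<n. g1 (Suc i) = g2 (Suc i)" using pf pfx_eq by auto
  have g0: "g1 0 \<noteq> g2 0"
  proof
    assume "g1 0 = g2 0"
    hence "pfx (Suc n) g1 = pfx (Suc n) g2" using pf pfx_Suc by blast
    thus False using pS by simp
  qed
  have sec: "sector s (w 0) (addr_cons (gk 0) (Infinite (\<lambda>i. gk (Suc i))))" if "gk \<in> RR s w" for gk
  proof -
    have "sector s (w 0) (Infinite (\<lambda>i. gk (i + 0)))" using that unfolding RR_def by blast
    thus ?thesis using Infinite_split[of gk 0] by simp
  qed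
  have sF: "s \<noteq> Infty"
  proof
    assume sI: "s = Infty"
    have "g1 0 = w 0" using sec[OF g(1)] sector_Infty_cons[of _ "w 0" "g1 0"] sI by simp
    moreover have "g2 0 = w 0" using sec[OF g(2)] sector_Infty_cons[of _ "w 0" "g2 0"] sI by simp
    ultimately show False using g0 by simp
  qed
  have s1: "(g1 0 = w 0 \<and> lt s ?X1) \<or> (g1 0 = w 0 + 1 \<and> lt ?X1 s)"
    using sec[OF g(1)] sector_cons[OF sF] by simp
  have s2: "(g2 0 = w 0 \<and> lt s ?X2) \<or> (g2 0 = w 0 + 1 \<and> lt ?X2 s)"
    using sec[OF g(2)] sector_cons[OF sF] by simp
  have EX: "\<forall>i<n. E ?X1 i = E ?X2 i" using agree by simp
  have secs1: "sector s (w (Suc i)) (sht i ?X1)" for i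
  proof -
    have "sector s (w (Suc i)) (Infinite (\<lambda>k. g1 (k + Suc i)))" using g(1) unfolding RR_def by blast
    thus ?thesis by simp
  qed
  have secs2: "sector s (w (Suc i)) (sht i ?X2)" for i
  proof -
    have "sector s (w (Suc i)) (Infinite (\<lambda>k. g2 (k + Suc i)))" using g(2) unfolding RR_def by blast
    thus ?thesis by simp
  qed
  have main: "Suc n < D \<and> (\<forall>i<n. E s i = E a i)"
    if ab: "lt a s" "lt s b" "\<forall>i<n. E a i = E b i" and aa: "a = ?X1 \<and> b = ?X2 \<or> a = ?X2 \<and> b = ?X1" for a b
  proof -
    from betw[OF ab] have B1: "\<forall>i<n. E s i = E a i"
      and B2: "\<forall>i\<le>n. lt (sht i a) (sht i s) \<and> lt (sht i s) (sht i b)" by auto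
    have secs: "sector s (w (Suc i)) (sht i a)" "sector s (w (Suc i)) (sht i b)" for i
      using aa secs1 secs2 by auto
    have all: "sector s (w (1 + i)) (sht i s)" if "i \<le> n" for i
    proof -
      have "lt (sht i a) (sht i s)" "lt (sht i s) (sht i b)" using B2 that by auto
      hence "sector s (w (Suc i)) (sht i s)" using sector_convex[OF secs(1) secs(2)] by blast
      thus ?thesis by simp
    qed
    obtain i where i: "i < D" "\<not> sector s (w (1 + i)) (sht i s)" using HD unfolding HD_def by blast
    have "\<not> i \<le> n" using all i(2) by blast
    hence "n < i" by simp
    thus ?thesis using i(1) B1 by simp
  qed
  have "Suc n < D \<and> (\<forall>i<n. E s i = E ?X1 i)"
  proof (cases "lt s ?X1")
    case True
    hence "lt ?X2 s" using s1 s2 g0 lt_asym by auto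
    thus ?thesis using main[of ?X2 ?X1] True EX by auto
  next
    case False
    hence "lt ?X1 s" "lt s ?X2" using s1 s2 g0 by auto
    thus ?thesis using main[of ?X1 ?X2] EX by auto
  qed
  thus ?thesis using agree g0 by simp
qed



declare addr_cons.simps(1)[simp del]

lemma card_bound:
  "HD s D w \<Longrightarrow> F \<subseteq> RR s w \<Longrightarrow> finite F \<Longrightarrow> inj_on (pfx n) F \<Longrightarrow> card F \<le> min n D + 1"
proof (induction n arbitrary: w F)
  case 0
  have "pfx 0 ` F \<subseteq> {[]}" unfolding pfx_def by auto
  hence "card (pfx 0 ` F) \<le> card {[]::int list}" by (rule card_mono[rotated]) simp
  hence "card (pfx 0 ` F) \<le> 1" by simp
  thus ?case using card_image[OF "0.prems"(4)] by simp
next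
  case (Suc n)
  let ?t = "\<lambda>g i. g (Suc i)"
  let ?w = "\<lambda>i. w (Suc i)"
  define T where "T = ?t ` F"
  have injt: "inj_on ?t F" using RR_tail_inj[of s w] Suc.prems(2) inj_on_subset by blast
  have cT: "card T = card F" unfolding T_def using card_image[OF injt] .
  have TR: "T \<subseteq> RR s ?w" unfolding T_def using Suc.prems(2) RR_tail by blast
  have fT: "finite T" unfolding T_def using Suc.prems(3) by simp
  have HD': "HD s D ?w" using HD_tail[OF Suc.prems(1)] .
  show ?case
  proof (cases "inj_on (pfx n) T")
    case True
    have "card T \<le> min n D + 1" using Suc.IH[OF HD' TR fT True] .
    thus ?thesis using cT by linarith
  next
    case False
    then obtain y1 y2 where y: "y1 \<in> T" "y2 \<in> T" "y1 \<noteq> y2" "pfx n y1 = pfx n y2"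
      unfolding inj_on_def by blast
    obtain g1 g2 where g12: "g1 \<in> F" "g2 \<in> F" "y1 = ?t g1" "y2 = ?t g2" using y T_def by blast
    have pS: "pfx (Suc n) a \<noteq> pfx (Suc n) b" if "a \<in> F" "b \<in> F" "?t a \<noteq> ?t b" for a b
      using Suc.prems(4) that unfolding inj_on_def by blast
    have col: "Suc n < D \<and> (\<forall>i<n. E s i = Some (of_int (g1 (Suc i))))"
      using collision[OF Suc.prems(1), of g1 g2 n] g12 y Suc.prems(2) pS[of g1 g2] by auto
    have inj': "inj_on (pfx n) (T - {y1})"
    proof
      fix z1 z2 assume z: "z1 \<in> T - {y1}" "z2 \<in> T - {y1}" "pfx n z1 = pfx n z2"
      show "z1 = z2"
      proof (rule ccontr)
        assume zne: "z1 \<noteq> z2"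
        obtain h1 h2 where h12: "h1 \<in> F" "h2 \<in> F" "z1 = ?t h1" "z2 = ?t h2" using z T_def by blast
        have c1: "(\<forall>i<n. E s i = Some (of_int (h1 (Suc i)))) \<and> h1 0 \<noteq> h2 0"
          using collision[OF Suc.prems(1), of h1 h2 n] h12 z zne Suc.prems(2) pS[of h1 h2] by auto
        have p1: "pfx n z1 = pfx n y1" using c1 col h12 g12 unfolding pfx_eq by auto
        have p2: "pfx n z2 = pfx n y1" using p1 z(3) by simp
        have d1: "h1 0 \<noteq> g1 0"
          using collision[OF Suc.prems(1), of h1 g1 n] h12 g12 z p1 Suc.prems(2) pS[of h1 g1] by auto
        have d2: "h2 0 \<noteq> g1 0"
          using collision[OF Suc.prems(1), of h2 g1 n] h12 g12 z p2 Suc.prems(2) pS[of h2 g1] by auto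
        have "h1 0 = w 0 \<or> h1 0 = w 0 + 1" "h2 0 = w 0 \<or> h2 0 = w 0 + 1" "g1 0 = w 0 \<or> g1 0 = w 0 + 1"
          using RR_first h12 g12 Suc.prems(2) by blast+
        thus False using c1 d1 d2 by auto
      qed
    qed
    have "card (T - {y1}) \<le> min n D + 1"
      using Suc.IH[OF HD' _ _ inj'] TR fT by auto
    moreover have "card (T - {y1}) = card T - 1" using y(1) fT by simp
    moreover have "card T \<ge> 1" using y(1) fT by (metis One_nat_def Suc_leI card_gt_0_iff empty_iff)
    ultimately show ?thesis using cT col by linarith
  qed
qed

lemma finite_sep: "finite F \<Longrightarrow> \<exists>n. inj_on (pfx n) (F :: (nat \<Rightarrow> int) set)"
proof -
  assume fF: "finite F"
  define S where "S = {(a, b). a \<in> F \<and> b \<in> F \<and> a \<noteq> b}"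
  have fS: "finite S" by (rule finite_subset[of S "F \<times> F"]) (auto simp: S_def fF)
  define d where "d = (\<lambda>(a::nat \<Rightarrow> int, b::nat \<Rightarrow> int). SOME i. a i \<noteq> b i)"
  define n where "n = Suc (Max (insert 0 (d ` S)))"
  have "inj_on (pfx n) F"
  proof
    fix a b assume ab: "a \<in> F" "b \<in> F" "pfx n a = pfx n b"
    show "a = b"
    proof (rule ccontr)
      assume "a \<noteq> b"
      hence "(a, b) \<in> S" using ab unfolding S_def by simp
      hence "d (a, b) \<le> Max (insert 0 (d ` S))" using fS by simp
      hence lt: "d (a, b) < n" unfolding n_def by simp
      have "\<exists>i. a i \<noteq> b i" using \<open>a \<noteq> b\<close> by auto
      hence "a (d (a, b)) \<noteq> b (d (a, b))" unfolding d_def by (simp, rule someI_ex)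
      thus False using ab(3) lt pfx_eq by blast
    qed
  qed
  thus ?thesis by blast
qed

lemma RR_finite:
  assumes "HD s D w"
  shows "finite (RR s w)"
proof (rule ccontr)
  assume "infinite (RR s w)"
  then obtain F where F: "F \<subseteq> RR s w" "finite F" "card F = D + 2"
    using infinite_arbitrarily_large by blast
  obtain n where "inj_on (pfx n) F" using finite_sep[OF F(2)] by blast
  hence "card F \<le> min n D + 1" using card_bound[OF assms F(1,2)] by blast
  thus False using F(3) by linarith
qed



declare addr_cons.simps(1)[simp del]

lemma per_mult:
  fixes f :: "nat \<Rightarrow> 'a" and i k p :: nat
  shows "(\<forall>i. f (i + p) = f i) \<Longrightarrow> f (i + k * p) = f i"
proof (induction k)
  case (Suc k)
  have "f (i + Suc k * p) = f ((i + k * p) + p)" by (simp add: algebra_simps)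
  also have "\<dots> = f (i + k * p)" using Suc.prems by blast
  finally show ?case using Suc by simp
qed simp

lemma itin_of_RR: "g \<in> RR s f \<Longrightarrow> itin s (Infinite g) = SInf (\<lambda>i. SInt (f i))"
  unfolding itin_Infinite RR_def by (auto simp: fun_eq_iff itin_sym_sector)

lemma HD_exists:
  assumes per: "\<forall>i. f (i + p) = f i" and p1: "p \<ge> 1"
    and hyp: "\<forall>k\<ge>1. sseq_shiftn k (SInf f) \<noteq> Some (kneading_plus s)"
  shows "\<exists>D. HD s D f"
proof (rule ccontr)
  assume "\<nexists>D. HD s D f"
  define P where "P m D \<longleftrightarrow> (\<forall>i<D. sector s (f (m + i)) (sht i s))" for m D
  have A: "\<forall>D. \<exists>m. P m D" using \<open>\<nexists>D. HD s D f\<close> unfolding HD_def P_def by blast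
  have fm: "f (m + i) = f (m mod p + p + i)" for m i
  proof -
    have e: "m + i = (m mod p + i) + (m div p) * p" using mod_div_mult_eq[of m p] by linarith
    have "f (m + i) = f ((m mod p + i) + (m div p) * p)" by (simp only: e)
    also have "\<dots> = f (m mod p + i)" using per_mult[OF per] by blast
    also have "\<dots> = f ((m mod p + i) + p)" using per by simp
    finally show ?thesis by (simp add: algebra_simps)
  qed
  have red: "P m D \<Longrightarrow> P (m mod p + p) D" for m D unfolding P_def using fm by simp
  have range: "m mod p + p \<in> {p..<2*p}" for m using p1 by simp
  have B: "\<forall>D. \<exists>m\<in>{p..<2*p}. P m D" using A red range by blast
  have mono: "P m D \<Longrightarrow> D' \<le> D \<Longrightarrow> P m D'" for m D D' unfolding P_def by auto
  have C: "\<exists>m\<in>{p..<2*p}. \<forall>D. P m D"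
  proof (rule ccontr)
    assume "\<not> ?thesis"
    hence nC: "\<forall>m\<in>{p..<2*p}. \<exists>D. \<not> P m D" by blast
    define Dm where "Dm m = (SOME D. \<not> P m D)" for m
    have Dm: "m \<in> {p..<2*p} \<Longrightarrow> \<not> P m (Dm m)" for m unfolding Dm_def using nC someI_ex by metis
    define DD where "DD = (\<Sum>m\<in>{p..<2*p}. Dm m)"
    obtain m where m: "m \<in> {p..<2*p}" "P m DD" using B by blast
    have "Dm m \<le> DD" unfolding DD_def using m(1) by (intro member_le_sum) auto
    thus False using mono[OF m(2)] Dm[OF m(1)] by blast
  qed
  then obtain m where m: "m \<ge> p" "\<forall>D. P m D" by auto
  have secm: "sector s (f (m + i)) (sht i s)" for i using m(2) unfolding P_def by (meson lessI)
  hence "\<not> reach s" unfolding reach_def using sector_ne by blast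
  hence "itin s s = SInf (\<lambda>i. SInt (f (m + i)))"
    by (simp add: itin_alt fun_eq_iff itin_sym_sector[OF secm])
  hence "kneading_plus s = SInf (\<lambda>i. f (i + m))"
    unfolding kneading_plus_def itin_plus_def by (simp add: fun_eq_iff add.commute)
  moreover have "m \<ge> 1" using m(1) p1 by simp
  hence "sseq_shiftn m (SInf f) \<noteq> Some (kneading_plus s)" using hyp by blast
  ultimately show False by simp
qed

lemma periodic_result:
  assumes hyp: "\<forall>k\<ge>1. sseq_shiftn k u \<noteq> Some (kneading_plus s)"
    and per: "sseq_periodic u" and it: "itin s r = map_sseq SInt u"
  shows "addr_periodic r"
proof -
  obtain f where u: "u = SInf f"
  proof (cases u)
    case (SFin xs)
    obtain n where n: "n \<ge> 1" "sseq_shiftn n u = Some u" using per unfolding sseq_periodic_def by blast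
    hence nl: "n \<le> length xs" and dr: "drop n xs = xs" using SFin by (auto split: if_splits)
    have "length xs - n = length xs" using arg_cong[OF dr, of length] by simp
    hence False using n(1) nl by linarith
    thus ?thesis by simp
  qed
  obtain p where p: "p \<ge> 1" "sseq_shiftn p u = Some u" using per unfolding sseq_periodic_def by blast
  have perf: "\<forall>i. f (i + p) = f i" using p(2) u by (simp add: fun_eq_iff)
  have it': "itin s r = SInf (\<lambda>i. SInt (f i))" using it u by (simp add: comp_def)
  obtain g where g: "r = Infinite g" "g \<in> RR s f" using itin_RR[OF it'] by blast
  obtain D where "HD s D f" using HD_exists[OF perf p(1)] hyp u by blast
  hence fin: "finite (RR s f)" by (rule RR_finite)
  define \<phi> where "\<phi> k = (\<lambda>i. g (i + k * p))" for k
  have phiR: "\<phi> k \<in> RR s f" for k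
  proof -
    have "sector s (f m) (Infinite (\<lambda>i. \<phi> k (i + m)))" for m
    proof -
      have "sector s (f (m + k * p)) (Infinite (\<lambda>i. g (i + (m + k * p))))" using g(2) unfolding RR_def by blast
      moreover have "f (m + k * p) = f m" using per_mult[OF perf] .
      ultimately show ?thesis unfolding \<phi>_def by (simp add: algebra_simps)
    qed
    thus ?thesis unfolding RR_def by blast
  qed
  have "\<not> inj \<phi>"
  proof
    assume "inj \<phi>"
    hence "infinite (range \<phi>)" using finite_imageD by blast
    moreover have "range \<phi> \<subseteq> RR s f" using phiR by blast
    ultimately show False using fin finite_subset by blast
  qed
  then obtain a b where ab: "a \<noteq> b" "\<phi> a = \<phi> b" unfolding inj_def by blast
  obtain a b where ab: "a < b" "\<phi> a = \<phi> b"
    using ab by (metis linorder_neqE)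
  define d where "d = (b - a) * p"
  have d1: "d \<ge> 1" unfolding d_def using ab(1) p(1) by simp
  have g'R: "\<phi> (b - a) \<in> RR s f" by (rule phiR)
  have sh1: "addr_shiftn (a * p) (Infinite g) = Some (Infinite (\<phi> a))"
    unfolding \<phi>_def by (simp add: shiftn_sht)
  have sh2: "addr_shiftn (a * p) (Infinite (\<phi> (b - a))) = Some (Infinite (\<phi> a))"
  proof -
    have e1: "(b - a) * p = b * p - a * p" by (rule diff_mult_distrib)
    have e2: "a * p \<le> b * p" using ab(1) by simp
    have e: "i + a * p + (b - a) * p = i + b * p" for i using e1 e2 by simp
    have "(\<lambda>i. \<phi> (b - a) (i + a * p)) = \<phi> b"
      unfolding \<phi>_def by (simp only: e)
    thus ?thesis using ab(2) by (simp add: shiftn_sht)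
  qed
  have "itin s (Infinite g) = itin s (Infinite (\<phi> (b - a)))"
    using itin_of_RR[OF g(2)] itin_of_RR[OF g'R] by simp
  hence "Infinite g = Infinite (\<phi> (b - a))" using part2[OF sh1 sh2] by blast
  hence gg: "g = (\<lambda>i. g (i + d))" unfolding \<phi>_def d_def by simp
  have "addr_shiftn d (Infinite g) = Some (Infinite g)"
    by (simp add: shiftn_sht gg[symmetric])
  thus ?thesis unfolding addr_periodic_def g(1) using d1 by blast
qed

theorem lemma3p6:
  fixes s :: addr
  shows "(\<forall>u :: int sseq.
            (\<forall>k\<ge>1. sseq_shiftn k u \<noteq> Some (kneading_plus s)
                  \<and> sseq_shiftn k u \<noteq> Some (kneading_minus s)) \<longrightarrow>
            (\<exists>r. itin s r = map_sseq SInt u) \<and>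
            (sseq_periodic u \<longrightarrow> (\<forall>r. itin s r = map_sseq SInt u \<longrightarrow> addr_periodic r)))
       \<and> (\<forall>t k r1 r2. addr_shiftn k r1 = Some t \<longrightarrow> addr_shiftn k r2 = Some t \<longrightarrow>
            itin s r1 = itin s r2 \<longrightarrow> r1 = r2)
       \<and> (\<forall>r1 r2. addr_intermediate r1 \<longrightarrow> addr_intermediate r2 \<longrightarrow>
            itin s r1 = itin s r2 \<longrightarrow> r1 = r2)"
proof (intro conjI)
  show "\<forall>u :: int sseq.
            (\<forall>k\<ge>1. sseq_shiftn k u \<noteq> Some (kneading_plus s)
                  \<and> sseq_shiftn k u \<noteq> Some (kneading_minus s)) \<longrightarrow>
            (\<exists>r. itin s r = map_sseq SInt u) \<and>
            (sseq_periodic u \<longrightarrow> (\<forall>r. itin s r = map_sseq SInt u \<longrightarrow> addr_periodic r))"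
  proof (intro allI impI)
    fix u :: "int sseq"
    assume hyp: "\<forall>k\<ge>1. sseq_shiftn k u \<noteq> Some (kneading_plus s) \<and> sseq_shiftn k u \<noteq> Some (kneading_minus s)"
    have ex: "\<exists>r. itin s r = map_sseq SInt u"
    proof (cases u)
      case (SFin xs)
      have "\<forall>k. 1 \<le> k \<and> k \<le> length xs \<longrightarrow> SFin (drop k xs) \<noteq> kneading_plus s"
        using hyp SFin by auto
      thus ?thesis using fin_exist SFin by simp
    next
      case (SInf f)
      thus ?thesis using inf_exist[of f s] hyp by (simp add: comp_def)
    qed
    have per: "sseq_periodic u \<longrightarrow> (\<forall>r. itin s r = map_sseq SInt u \<longrightarrow> addr_periodic r)"
      using periodic_result[of u s] hyp by blast
    show "(\<exists>r. itin s r = map_sseq SInt u) \<and>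
            (sseq_periodic u \<longrightarrow> (\<forall>r. itin s r = map_sseq SInt u \<longrightarrow> addr_periodic r))"
      using ex per by blast
  qed
  show "\<forall>t k r1 r2. addr_shiftn k r1 = Some t \<longrightarrow> addr_shiftn k r2 = Some t \<longrightarrow>
            itin s r1 = itin s r2 \<longrightarrow> r1 = r2"
    using part2 by blast
  show "\<forall>r1 r2. addr_intermediate r1 \<longrightarrow> addr_intermediate r2 \<longrightarrow>
            itin s r1 = itin s r2 \<longrightarrow> r1 = r2"
    using part3 by blast
qed


end
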